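(* Let $\{p_\sigma\}$ and $\{p'_\sigma\}$ be two systems of probability parameters indexed by the non-empty proper subsets $\sigma\subsetneq[n]$ with $p_\sigma\le p'_\sigma$ for every simplex $\sigma$, and let $\underline{\mathbb P}_n,\underline{\mathbb P}'_n$ (resp. $\overline{\mathbb P}_n,\overline{\mathbb P}'_n$) be the associated lower (resp. upper) measures. Then for any integer $d\ge0$, $$\underline{\mathbb P}_n(\dim Y\ge d)\le\underline{\mathbb P}'_n(\dim Y\ge d)\quad\text{and}\quad\overline{\mathbb P}_n(\dim Y\ge d)\le\overline{\mathbb P}'_n(\dim Y\ge d).$$
   Context: $[n]=\{0,\dots,n\}$. Given parameters $p_\sigma\in[0,1]$ for non-empty proper subsets $\sigma\subsetneq[n]$, let $X$ be the random hypergraph containing each such $\sigma$ independently with probability $p_\sigma$. The lower measure is the law of the largest simplicial complex contained in $X$; the upper measure is the law of the smallest simplicial complex containing $X$. *)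

theory Defs
  imports "HOL-Probability.Probability"
begin

definition simplices :: "nat \<Rightarrow> nat set set" where
  "simplices n = {\<sigma>. \<sigma> \<subseteq> {0..n} \<and> \<sigma> \<noteq> {} \<and> \<sigma> \<noteq> {0..n}}"

definition hypergraph_pmf :: "nat \<Rightarrow> (nat set \<Rightarrow> real) \<Rightarrow> nat set set pmf" where
  "hypergraph_pmf n p =
     map_pmf (\<lambda>f. {\<sigma> \<in> simplices n. f \<sigma>})
       (Pi_pmf (simplices n) False (\<lambda>\<sigma>. bernoulli_pmf (p \<sigma>)))"

text \<open>Largest simplicial complex contained in X.\<close>
definition lower_complex :: "nat set set \<Rightarrow> nat set set" where
  "lower_complex X = {\<sigma> \<in> X. \<forall>\<tau>. \<tau> \<subseteq> \<sigma> \<and> \<tau> \<noteq> {} \<longrightarrow> \<tau> \<in> X}"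

text \<open>Smallest simplicial complex containing X.\<close>
definition upper_complex :: "nat set set \<Rightarrow> nat set set" where
  "upper_complex X = {\<tau>. \<tau> \<noteq> {} \<and> (\<exists>\<sigma>\<in>X. \<tau> \<subseteq> \<sigma>)}"

definition lower_measure :: "nat \<Rightarrow> (nat set \<Rightarrow> real) \<Rightarrow> nat set set pmf" where
  "lower_measure n p = map_pmf lower_complex (hypergraph_pmf n p)"

definition upper_measure :: "nat \<Rightarrow> (nat set \<Rightarrow> real) \<Rightarrow> nat set set pmf" where
  "upper_measure n p = map_pmf upper_complex (hypergraph_pmf n p)"

definition complex_dim :: "nat set set \<Rightarrow> int" where
  "complex_dim K = (if K = {} then -1 else int (Max (card ` K)) - 1)"

end

theory Submission
  imports Defs
begin


lemma bern_coupling: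
  fixes p p' :: real
  assumes "0 \<le> p" "p \<le> p'" "p' \<le> 1"
  shows "\<exists>c. map_pmf fst c = bernoulli_pmf p \<and> map_pmf snd c = bernoulli_pmf p'
            \<and> (\<forall>x\<in>set_pmf c. fst x \<longrightarrow> snd x)"
proof -
  define q where "q = (p' - p) / (1 - p)"
  have q: "0 \<le> q" "q \<le> 1" using assms by (auto simp: q_def divide_simps)
  define c where "c = bind_pmf (bernoulli_pmf p) (\<lambda>a. bind_pmf (bernoulli_pmf q) (\<lambda>b. return_pmf (a, a \<or> b)))"
  have 1: "map_pmf fst c = bernoulli_pmf p"
    unfolding c_def by (simp add: map_bind_pmf bind_return_pmf' bind_pmf_const)
  have "pmf (map_pmf snd c) True = pmf (bernoulli_pmf p') True"
  proof -
    have "map_pmf snd c = bind_pmf (bernoulli_pmf p) (\<lambda>a. bind_pmf (bernoulli_pmf q) (\<lambda>b. return_pmf (a \<or> b)))"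
      unfolding c_def by (simp add: map_bind_pmf)
    hence "pmf (map_pmf snd c) True = p + (1 - p) * q"
      using assms q by (simp add: pmf_bind)
    also have "\<dots> = p'" using assms by (cases "p = 1") (auto simp: q_def)
    finally show ?thesis using assms by simp
  qed
  hence 2: "map_pmf snd c = bernoulli_pmf p'"
    by (metis (full_types) pmf_False_conv_True pmf_eqI)
  have 3: "\<forall>x\<in>set_pmf c. fst x \<longrightarrow> snd x" unfolding c_def by auto
  show ?thesis using 1 2 3 by blast
qed

lemma hyp_mono:
  assumes p: "\<And>\<sigma>. \<sigma> \<in> simplices n \<Longrightarrow> 0 \<le> p \<sigma> \<and> p \<sigma> \<le> 1"
      and p': "\<And>\<sigma>. \<sigma> \<in> simplices n \<Longrightarrow> 0 \<le> p' \<sigma> \<and> p' \<sigma> \<le> 1"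
      and le: "\<And>\<sigma>. \<sigma> \<in> simplices n \<Longrightarrow> p \<sigma> \<le> p' \<sigma>"
      and U: "\<And>A B. A \<subseteq> B \<Longrightarrow> B \<subseteq> simplices n \<Longrightarrow> A \<in> U \<Longrightarrow> B \<in> U"
  shows "measure_pmf.prob (hypergraph_pmf n p) U \<le> measure_pmf.prob (hypergraph_pmf n p') U"
proof -
  define S where "S = simplices n"
  have finS: "finite S" unfolding S_def simplices_def
    by (rule finite_subset[of _ "Pow {0..n}"]) auto
  have ex: "\<forall>\<sigma>\<in>S. \<exists>c. map_pmf fst c = bernoulli_pmf (p \<sigma>) \<and> map_pmf snd c = bernoulli_pmf (p' \<sigma>)
            \<and> (\<forall>x\<in>set_pmf c. fst x \<longrightarrow> snd x)"
    using p p' le by (auto simp: S_def intro!: bern_coupling)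
  then obtain c where c: "\<And>\<sigma>. \<sigma> \<in> S \<Longrightarrow> map_pmf fst (c \<sigma>) = bernoulli_pmf (p \<sigma>) \<and> map_pmf snd (c \<sigma>) = bernoulli_pmf (p' \<sigma>)
            \<and> (\<forall>x\<in>set_pmf (c \<sigma>). fst x \<longrightarrow> snd x)" by metis
  define C where "C = Pi_pmf S (False, False) c"
  have e1: "Pi_pmf S False (\<lambda>\<sigma>. bernoulli_pmf (p \<sigma>)) = map_pmf (\<lambda>h. fst \<circ> h) C"
  proof -
    have "Pi_pmf S False (\<lambda>\<sigma>. bernoulli_pmf (p \<sigma>)) = Pi_pmf S False (\<lambda>\<sigma>. map_pmf fst (c \<sigma>))"
      by (rule Pi_pmf_cong) (auto simp: c)
    also have "\<dots> = map_pmf (\<lambda>h. fst \<circ> h) C" unfolding C_def by (rule Pi_pmf_map[OF finS]) simp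
    finally show ?thesis .
  qed
  have e2: "Pi_pmf S False (\<lambda>\<sigma>. bernoulli_pmf (p' \<sigma>)) = map_pmf (\<lambda>h. snd \<circ> h) C"
  proof -
    have "Pi_pmf S False (\<lambda>\<sigma>. bernoulli_pmf (p' \<sigma>)) = Pi_pmf S False (\<lambda>\<sigma>. map_pmf snd (c \<sigma>))"
      by (rule Pi_pmf_cong) (auto simp: c)
    also have "\<dots> = map_pmf (\<lambda>h. snd \<circ> h) C" unfolding C_def by (rule Pi_pmf_map[OF finS]) simp
    finally show ?thesis .
  qed
  have "measure_pmf.prob (hypergraph_pmf n p) U = measure_pmf.prob C {h. {\<sigma> \<in> S. fst (h \<sigma>)} \<in> U}"
    unfolding hypergraph_pmf_def S_def[symmetric] e1 by (simp add: vimage_def)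
  also have "\<dots> \<le> measure_pmf.prob C {h. {\<sigma> \<in> S. snd (h \<sigma>)} \<in> U}"
  proof (rule measure_pmf.finite_measure_mono_AE)
    show "AE h in measure_pmf C. h \<in> {h. {\<sigma> \<in> S. fst (h \<sigma>)} \<in> U} \<longrightarrow> h \<in> {h. {\<sigma> \<in> S. snd (h \<sigma>)} \<in> U}"
      unfolding AE_measure_pmf_iff
    proof (intro ballI impI)
      fix h assume h: "h \<in> set_pmf C" and A: "h \<in> {h. {\<sigma> \<in> S. fst (h \<sigma>)} \<in> U}"
      have "\<forall>\<sigma>\<in>S. h \<sigma> \<in> set_pmf (c \<sigma>)" using h unfolding C_def set_Pi_pmf[OF finS] PiE_dflt_def by auto
      hence "{\<sigma> \<in> S. fst (h \<sigma>)} \<subseteq> {\<sigma> \<in> S. snd (h \<sigma>)}" using c by blast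
      thus "h \<in> {h. {\<sigma> \<in> S. snd (h \<sigma>)} \<in> U}" using A U[of "{\<sigma> \<in> S. fst (h \<sigma>)}" "{\<sigma> \<in> S. snd (h \<sigma>)}"]
        by (auto simp: S_def)
    qed
  qed auto
  also have "\<dots> = measure_pmf.prob (hypergraph_pmf n p') U"
    unfolding hypergraph_pmf_def S_def[symmetric] e2 by (simp add: vimage_def)
  finally show ?thesis .
qed

lemma fin_pow: "K \<subseteq> Pow {0..n::nat} \<Longrightarrow> finite K"
proof -
  assume "K \<subseteq> Pow {0..n}"
  moreover have "finite (Pow {0..n})" by simp
  ultimately show ?thesis by (rule finite_subset)
qed

lemma dim_iff:
  assumes "finite K"
  shows "int d \<le> complex_dim K \<longleftrightarrow> (\<exists>\<sigma>\<in>K. d + 1 \<le> card \<sigma>)"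
proof (cases "K = {}")
  case False
  have "int d \<le> complex_dim K \<longleftrightarrow> d < Max (card ` K)" using False by (simp add: complex_dim_def)
  also have "\<dots> \<longleftrightarrow> (\<exists>\<sigma>\<in>K. d < card \<sigma>)" using False assms by (simp add: Max_gr_iff)
  finally show ?thesis by (simp add: Suc_le_eq)
qed (simp add: complex_dim_def)

lemma dim_mono: "int d \<le> complex_dim K \<Longrightarrow> K \<subseteq> K' \<Longrightarrow> K' \<subseteq> Pow {0..n::nat} \<Longrightarrow> int d \<le> complex_dim K'"
  using dim_iff[of K d] dim_iff[of K' d] fin_pow[of K' n] fin_pow[of K n] by blast

theorem corollary4p3:
  fixes n d :: nat and p p' :: "nat set \<Rightarrow> real"
  assumes "\<And>\<sigma>. \<sigma> \<in> simplices n \<Longrightarrow> 0 \<le> p \<sigma> \<and> p \<sigma> \<le> 1"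
      and "\<And>\<sigma>. \<sigma> \<in> simplices n \<Longrightarrow> 0 \<le> p' \<sigma> \<and> p' \<sigma> \<le> 1"
      and "\<And>\<sigma>. \<sigma> \<in> simplices n \<Longrightarrow> p \<sigma> \<le> p' \<sigma>"
  shows "measure_pmf.prob (lower_measure n p) {Y. int d \<le> complex_dim Y}
           \<le> measure_pmf.prob (lower_measure n p') {Y. int d \<le> complex_dim Y}
       \<and> measure_pmf.prob (upper_measure n p) {Y. int d \<le> complex_dim Y}
           \<le> measure_pmf.prob (upper_measure n p') {Y. int d \<le> complex_dim Y}"
proof
  have SP: "simplices n \<subseteq> Pow {0..n}" by (auto simp: simplices_def)
  show "measure_pmf.prob (lower_measure n p) {Y. int d \<le> complex_dim Y}
           \<le> measure_pmf.prob (lower_measure n p') {Y. int d \<le> complex_dim Y}"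
    unfolding lower_measure_def measure_map_pmf
  proof (rule hyp_mono[OF assms])
    fix A B assume AB: "A \<subseteq> B" "B \<subseteq> simplices n" and "A \<in> lower_complex -` {Y. int d \<le> complex_dim Y}"
    hence "int d \<le> complex_dim (lower_complex A)" by simp
    moreover have "lower_complex A \<subseteq> lower_complex B" using AB(1) by (auto simp: lower_complex_def)
    moreover have "lower_complex B \<subseteq> Pow {0..n}" using AB SP by (auto simp: lower_complex_def)
    ultimately have "int d \<le> complex_dim (lower_complex B)"
      by (rule dim_mono)
    thus "B \<in> lower_complex -` {Y. int d \<le> complex_dim Y}" by simp
  qed
  show "measure_pmf.prob (upper_measure n p) {Y. int d \<le> complex_dim Y}
           \<le> measure_pmf.prob (upper_measure n p') {Y. int d \<le> complex_dim Y}"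
    unfolding upper_measure_def measure_map_pmf
  proof (rule hyp_mono[OF assms])
    fix A B assume AB: "A \<subseteq> B" "B \<subseteq> simplices n" and "A \<in> upper_complex -` {Y. int d \<le> complex_dim Y}"
    hence "int d \<le> complex_dim (upper_complex A)" by simp
    moreover have "upper_complex A \<subseteq> upper_complex B" using AB(1) by (auto simp: upper_complex_def)
    moreover have "upper_complex B \<subseteq> Pow {0..n}" using AB SP by (fastforce simp: upper_complex_def)
    ultimately have "int d \<le> complex_dim (upper_complex B)"
      by (rule dim_mono)
    thus "B \<in> upper_complex -` {Y. int d \<le> complex_dim Y}" by simp
  qed
qed

end
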